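(* Assume the problem is a quadratic program: there are constant matrices $H\in\mathbb{R}^{n\times n}$, $A_{\mathcal I}\in\mathbb{R}^{m_{\mathcal I}\times n}$, $A_{\mathcal E}\in\mathbb{R}^{m_{\mathcal E}\times n}$ with $H(x,\lambda)\equiv H$, $A_{\mathcal I}(x)\equiv A_{\mathcal I}$, $A_{\mathcal E}(x)\equiv A_{\mathcal E}$. In the setting of the context (with the sequences $\{\mu_k\}$, $\{w_k\}$, subsequence $\mathcal K$), for all $k\in\mathcal K$ sufficiently large and all $q\ge1$, $$J_F(w_{k+1})\,\hat w^{w^*,q+1}_{k+1}=-\sum_{i=1}^q\binom{q+1}{i}\begin{pmatrix}0\\ \bigl[\hat\Lambda^{w^*,q+1-i}_{k+1}\bigr]_{\mathcal I}A_{\mathcal I}\hat x^{w^*,i}_{k+1}\\ 0\end{pmatrix}.$$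
   Context: Problem: minimize $f(x)$ subject to $c_{\mathcal I}(x)\ge0$, $c_{\mathcal E}(x)=0$, $f,c_i\colon\mathbb{R}^n\to\mathbb{R}$, $c=(c_{\mathcal I}^T,c_{\mathcal E}^T)^T\in\mathbb{R}^m$, $m=m_{\mathcal I}+m_{\mathcal E}$. Notation: $g=\nabla f$, $A$ the Jacobian of $c$, $H(x,\lambda)$ the Hessian in $x$ of $f(x)-\lambda^Tc(x)$, $[\cdot]_S$ rows indexed by $S$, uppercase = diagonal matrix of the lowercase vector (so $\hat\Lambda=\mathrm{diag}(\hat\lambda)$), $e$ the all-ones vector, $w=(x,\lambda)$ with superscripts/subscripts applying to both parts. $F^\mu(x,\lambda)=\bigl(g(x)-A(x)^T\lambda;\ C_{\mathcal I}(x)[\lambda]_{\mathcal I}-\mu e;\ c_{\mathcal E}(x)\bigr)$ with Jacobian $J_F$ in $w$. Let $x^*$ be a KKT point at which LICQ, strict complementarity (multiplier $\lambda^*$ with $[\lambda^*]_i>0$ for active inequality indices) and strong second-order sufficiency ($p^TH(x^*,\lambda^* )p\ge\omega\|p\|^2$, $\omega>0$, for all $p$ orthogonal to all active constraint gradients) hold; $w^*=(x^*,\lambda^* )$. Let $w^{w^*,0}$ be the locally unique smooth function near $0$ with $F^0(w^{w^*,0}(r))=r$, $w^{w^*,0}(0)=w^*$; with $\mathrm{nml}(r)=r/\|r\|$ ($r\ne0$), $\mathrm{nml}(0)=0$, let $w^{w^*,\mu,r}(\rho)=w^{w^*,0}(\rho\,\mathrm{nml}(r)+(0,\mu e^T,0)^T)$.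 Let $\{\mu_k\}$ be strictly decreasing positive, $\{w_k\}$ with $\|F^{\mu_k}(w_{k+1})\|\le\epsilon(\mu_k)$, $\epsilon(\mu)=\Theta(\mu)$ positive, and $w_{k+1}\to w^*$ along a subsequence $\mathcal K$. Set $r_{k+1}=F^{\mu_{k+1}}(w_{k+1})$ and for $q\ge1$ $$\hat w^{w^*,q}_{k+1}=\frac{d^q w^{w^*,\mu_{k+1},r_{k+1}}(\rho)}{d\rho^q}\Big|_{\rho=\|r_{k+1}\|}\cdot(-\|r_{k+1}\|)^q.$$ *)

theory Defs
  imports "HOL-Analysis.Analysis" "HOL-Library.Landau_Symbols"
begin

text \<open>Quadratic program data: objective f(x) = 1/2 x'Hx + d'x (+ const), so g(x) = Hx + d;
  constraints c(x) = A x + b with index type 'm; the inequality indices are the set I,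
  the equality indices are the complement UNIV - I.\<close>

definition qp_c :: "real^'n^'m \<Rightarrow> real^'m \<Rightarrow> real^'n \<Rightarrow> real^'m" where
  "qp_c A b x = A *v x + b"

definition qp_g :: "real^'n^'n \<Rightarrow> real^'n \<Rightarrow> real^'n \<Rightarrow> real^'n" where
  "qp_g H d x = H *v x + d"

text \<open>The map F^mu(x,lambda) = (g(x) - A' lambda ; C_I(x) lambda_I - mu e ; c_E(x)),
  with the inequality and equality components stored in the positions of their indices.\<close>
definition qpF :: "real^'n^'n \<Rightarrow> real^'n \<Rightarrow> real^'n^'m \<Rightarrow> real^'m \<Rightarrow> 'm set \<Rightarrow> real
    \<Rightarrow> ((real^'n) \<times> (real^'m)) \<Rightarrow> ((real^'n) \<times> (real^'m))" where
  "qpF H d A b I \<mu> w =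
     (qp_g H d (fst w) - transpose A *v snd w,
      \<chi> j. if j \<in> I then qp_c A b (fst w) $ j * snd w $ j - \<mu> else qp_c A b (fst w) $ j)"

definition ehat :: "'m set \<Rightarrow> (real^'n) \<times> (real^'m)" where
  "ehat I = (0, \<chi> j. if j \<in> I then 1 else 0)"

definition active_set :: "real^'n^'m \<Rightarrow> real^'m \<Rightarrow> 'm set \<Rightarrow> real^'n \<Rightarrow> 'm set" where
  "active_set A b I x = {i \<in> I. qp_c A b x $ i = 0} \<union> (UNIV - I)"

definition nml :: "'a::real_normed_vector \<Rightarrow> 'a" where
  "nml r = (if r = 0 then 0 else r /\<^sub>R norm r)"

text \<open>C-infinity smoothness on a set U: there is a family D x [h1,...,hk] of all iterated
  (directional) Frechet derivatives, each differentiable at every point of U.\<close>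
definition smooth_on :: "'a::real_normed_vector set \<Rightarrow> ('a \<Rightarrow> 'b::real_normed_vector) \<Rightarrow> bool" where
  "smooth_on U f \<longleftrightarrow> (\<exists>D :: 'a \<Rightarrow> 'a list \<Rightarrow> 'b.
      (\<forall>x\<in>U. D x [] = f x) \<and>
      (\<forall>x\<in>U. \<forall>hs. ((\<lambda>y. D y hs) has_derivative (\<lambda>h. D x (h # hs))) (at x)))"

primrec higher_vderiv :: "nat \<Rightarrow> (real \<Rightarrow> 'a::real_normed_vector) \<Rightarrow> real \<Rightarrow> 'a" where
  "higher_vderiv 0 \<phi> = \<phi>"
| "higher_vderiv (Suc q) \<phi> = (\<lambda>t. vector_derivative (higher_vderiv q \<phi>) (at t))"

text \<open>w^{w*,mu,r}(rho) = w^{w*,0}(rho nml(r) + (0, mu e, 0)), where W = w^{w*,0}.\<close>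
definition wpath :: "(((real^'n) \<times> (real^'m)) \<Rightarrow> ((real^'n) \<times> (real^'m))) \<Rightarrow> 'm set \<Rightarrow> real
    \<Rightarrow> ((real^'n) \<times> (real^'m)) \<Rightarrow> real \<Rightarrow> ((real^'n) \<times> (real^'m))" where
  "wpath W I \<mu> r \<rho> = W (\<rho> *\<^sub>R nml r + \<mu> *\<^sub>R ehat I)"

definition what :: "(((real^'n) \<times> (real^'m)) \<Rightarrow> ((real^'n) \<times> (real^'m))) \<Rightarrow> 'm set \<Rightarrow> real
    \<Rightarrow> ((real^'n) \<times> (real^'m)) \<Rightarrow> nat \<Rightarrow> ((real^'n) \<times> (real^'m))" where
  "what W I \<mu> r q = (- norm r) ^ q *\<^sub>R higher_vderiv q (wpath W I \<mu> r) (norm r)"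

end

theory Submission imports Defs begin


definition LinP :: "real^'n^'n \<Rightarrow> real^'n^'m \<Rightarrow> real^'m \<Rightarrow> 'm set \<Rightarrow> (real^'n) \<times> (real^'m) \<Rightarrow> (real^'n) \<times> (real^'m)" where
  "LinP H A b I w = (H *v fst w - transpose A *v snd w, \<chi> l. if l \<in> I then b $ l * snd w $ l else (A *v fst w) $ l)"

definition BilP :: "real^'n^'m \<Rightarrow> 'm set \<Rightarrow> (real^'n) \<times> (real^'m) \<Rightarrow> (real^'n) \<times> (real^'m) \<Rightarrow> (real^'n) \<times> (real^'m)" where
  "BilP A I u v = (0, \<chi> l. if l \<in> I then (A *v fst u) $ l * snd v $ l else 0)"

definition cP :: "real^'n \<Rightarrow> real^'m \<Rightarrow> 'm set \<Rightarrow> (real^'n) \<times> (real^'m)" where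
  "cP d b I = (d, \<chi> l. if l \<in> I then 0 else b $ l)"

lemma F_decomp: "qpF H d A b I \<mu> w = LinP H A b I w + BilP A I w w + cP d b I - \<mu> *\<^sub>R ehat I"
  by (auto simp: qpF_def LinP_def BilP_def cP_def ehat_def qp_g_def qp_c_def vec_eq_iff prod_eq_iff
      matrix_vector_mult_add_rdistrib algebra_simps)

lemma LinP_linear: "linear (LinP H A b I)"
  by (rule linearI) (auto simp: LinP_def vec_eq_iff 
      matrix_vector_mult_scaleR algebra_simps matrix_vector_right_distrib)

lemma LinP_bl: "bounded_linear (LinP H A b I)"
  using LinP_linear linear_conv_bounded_linear by blast

lemma BilP_bilinear: "bilinear (BilP A I)"
  unfolding bilinear_def
  by (auto intro!: linearI simp: BilP_def vec_eq_iff matrix_vector_right_distrib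
      matrix_vector_mult_scaleR algebra_simps)

lemma BilP_bb: "bounded_bilinear (BilP A I)"
  using BilP_bilinear bilinear_conv_bounded_bilinear by blast



lemma F_deriv: "(qpF H d A b I \<mu> has_derivative (\<lambda>h. LinP H A b I h + BilP A I w h + BilP A I h w)) (at w)"
proof -
  have e: "qpF H d A b I \<mu> = (\<lambda>w. LinP H A b I w + BilP A I w w + cP d b I - \<mu> *\<^sub>R ehat I)"
    by (rule ext) (rule F_decomp)
  have "((\<lambda>w. LinP H A b I w + BilP A I w w + cP d b I - \<mu> *\<^sub>R ehat I) has_derivative
      (\<lambda>h. LinP H A b I h + (BilP A I w h + BilP A I h w) + 0 - 0)) (at w)"
    by (intro derivative_intros bounded_linear.has_derivative[OF LinP_bl]
        bounded_bilinear.FDERIV[OF BilP_bb] has_derivative_ident)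
  then show ?thesis unfolding e by (simp add: algebra_simps)
qed

lemma pascal:
  fixes a :: "nat \<Rightarrow> nat \<Rightarrow> 'v::real_vector"
  shows "(\<Sum>i\<le>m. real (m choose i) *\<^sub>R (a (Suc i) (m - i) + a i (Suc m - i)))
       = (\<Sum>i\<le>Suc m. real (Suc m choose i) *\<^sub>R a i (Suc m - i))"
proof -
  have r: "(\<Sum>i\<le>Suc m. real (Suc m choose i) *\<^sub>R a i (Suc m - i))
     = a 0 (Suc m) + (\<Sum>i\<le>m. real (m choose i) *\<^sub>R a (Suc i) (m - i))
        + (\<Sum>i\<le>m. real (m choose Suc i) *\<^sub>R a (Suc i) (m - i))"
    by (simp add: sum.atMost_Suc_shift scaleR_add_left sum.distrib del: sum.atMost_Suc)
  have l2: "(\<Sum>i\<le>m. real (m choose i) *\<^sub>R a i (Suc m - i))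
     = (\<Sum>i\<le>Suc m. real (m choose i) *\<^sub>R a i (Suc m - i))"
    by simp
  also have "\<dots> = a 0 (Suc m) + (\<Sum>i\<le>m. real (m choose Suc i) *\<^sub>R a (Suc i) (m - i))"
    by (simp add: sum.atMost_Suc_shift del: sum.atMost_Suc)
  finally show ?thesis using r by (simp add: scaleR_add_right sum.distrib)
qed



lemma path_identity:
  fixes L :: "'v::real_normed_vector \<Rightarrow> 'v" and B :: "'v \<Rightarrow> 'v \<Rightarrow> 'v"
    and \<psi> :: "nat \<Rightarrow> real \<Rightarrow> 'v"
  assumes bl: "bounded_linear L" and bb: "bounded_bilinear B"
    and S: "open S" "\<rho>0 \<in> S"
    and der: "\<And>j \<rho>. \<rho> \<in> S \<Longrightarrow> (\<psi> j has_vector_derivative \<psi> (Suc j) \<rho>) (at \<rho>)"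
    and ident: "\<And>\<rho>. \<rho> \<in> S \<Longrightarrow> L (\<psi> 0 \<rho>) + B (\<psi> 0 \<rho>) (\<psi> 0 \<rho>) = \<rho> *\<^sub>R n + c"
    and q: "q \<ge> 1"
  shows "L (\<psi> (q+1) \<rho>0) + B (\<psi> 0 \<rho>0) (\<psi> (q+1) \<rho>0) + B (\<psi> (q+1) \<rho>0) (\<psi> 0 \<rho>0)
       = - (\<Sum>i = 1..q. real ((q+1) choose i) *\<^sub>R B (\<psi> i \<rho>0) (\<psi> (q+1-i) \<rho>0))"
proof -
  define Q where "Q m \<rho> = L (\<psi> m \<rho>) + (\<Sum>i\<le>m. real (m choose i) *\<^sub>R B (\<psi> i \<rho>) (\<psi> (m-i) \<rho>))" for m \<rho>
  have QD: "(Q m has_vector_derivative Q (Suc m) \<rho>) (at \<rho>)" if "\<rho> \<in> S" for m \<rho>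
  proof -
    have "(Q m has_vector_derivative L (\<psi> (Suc m) \<rho>) + (\<Sum>i\<le>m. real (m choose i) *\<^sub>R
        (B (\<psi> i \<rho>) (\<psi> (Suc (m-i)) \<rho>) + B (\<psi> (Suc i) \<rho>) (\<psi> (m-i) \<rho>)))) (at \<rho>)"
      unfolding Q_def
      by (intro has_vector_derivative_add has_vector_derivative_sum bounded_linear.has_vector_derivative[OF bounded_linear_scaleR_right]
          bounded_linear.has_vector_derivative[OF bl] bounded_bilinear.has_vector_derivative[OF bb]
          der that)
    moreover have "(\<Sum>i\<le>m. real (m choose i) *\<^sub>R
        (B (\<psi> i \<rho>) (\<psi> (Suc (m-i)) \<rho>) + B (\<psi> (Suc i) \<rho>) (\<psi> (m-i) \<rho>)))
       = (\<Sum>i\<le>Suc m. real (Suc m choose i) *\<^sub>R B (\<psi> i \<rho>) (\<psi> (Suc m - i) \<rho>))"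
      using pascal[of m "\<lambda>i j. B (\<psi> i \<rho>) (\<psi> j \<rho>)"]
      by (simp add: Suc_diff_le add.commute)
    ultimately show ?thesis unfolding Q_def by simp
  qed
  have Q1: "Q 1 \<rho> = n" if "\<rho> \<in> S" for \<rho>
  proof -
    have "((\<lambda>\<rho>. \<rho> *\<^sub>R n + c) has_vector_derivative n) (at \<rho>)"
      by (auto intro!: derivative_eq_intros)
    then have "(Q 0 has_vector_derivative n) (at \<rho>)"
      by (rule has_vector_derivative_transform_within_open[OF _ S(1) that])
         (simp add: Q_def ident)
    then show ?thesis using QD[OF that, of 0] vector_derivative_unique_at by auto
  qed
  have Qm: "\<forall>\<rho>\<in>S. Q (Suc (Suc m)) \<rho> = 0" for m
  proof (induction m)
    case 0
    show ?case
    proof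
      fix \<rho> assume r: "\<rho> \<in> S"
      have "((\<lambda>\<rho>. n) has_vector_derivative 0) (at \<rho>)" by simp
      then have "(Q 1 has_vector_derivative 0) (at \<rho>)"
        by (rule has_vector_derivative_transform_within_open[OF _ S(1) r]) (simp add: Q1[symmetric])
      then show "Q (Suc (Suc 0)) \<rho> = 0" using QD[OF r, of 1] vector_derivative_unique_at by auto
    qed
  next
    case (Suc m)
    show ?case
    proof
      fix \<rho> assume r: "\<rho> \<in> S"
      have "((\<lambda>\<rho>. 0) has_vector_derivative 0) (at \<rho>)" by simp
      then have "(Q (Suc (Suc m)) has_vector_derivative 0) (at \<rho>)"
        by (rule has_vector_derivative_transform_within_open[OF _ S(1) r]) (use Suc in simp)
      then show "Q (Suc (Suc (Suc m))) \<rho> = 0" using QD[OF r, of "Suc (Suc m)"] vector_derivative_unique_at by auto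
    qed
  qed
  obtain m where m: "q = Suc m" using q by (cases q) auto
  have z: "Q (q+1) \<rho>0 = 0" using Qm[of m] S(2) m by simp
  have split: "(\<Sum>i\<le>q+1. real ((q+1) choose i) *\<^sub>R B (\<psi> i \<rho>0) (\<psi> (q+1-i) \<rho>0))
      = B (\<psi> 0 \<rho>0) (\<psi> (q+1) \<rho>0) + (\<Sum>i = 1..q. real ((q+1) choose i) *\<^sub>R B (\<psi> i \<rho>0) (\<psi> (q+1-i) \<rho>0))
        + B (\<psi> (q+1) \<rho>0) (\<psi> 0 \<rho>0)"
  proof -
    have "{..q+1} = insert 0 (insert (q+1) {1..q})" by auto
    then show ?thesis by (simp add: algebra_simps)
  qed
  show ?thesis using z unfolding Q_def split by (simp add: algebra_simps eq_neg_iff_add_eq_0)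
qed



lemma F_mu: "qpF H d A b I \<mu> w = qpF H d A b I 0 w - \<mu> *\<^sub>R ehat I"
  by (simp add: F_decomp)

lemma pointwise:
  fixes H :: "real^'n^'n" and A :: "real^'n^'m"
    and W :: "((real^'n) \<times> (real^'m)) \<Rightarrow> ((real^'n) \<times> (real^'m))"
    and D :: "((real^'n) \<times> (real^'m)) \<Rightarrow> ((real^'n) \<times> (real^'m)) list \<Rightarrow> ((real^'n) \<times> (real^'m))"
  assumes U: "open U"
    and D0: "\<forall>x\<in>U. D x [] = W x"
    and DD: "\<forall>x\<in>U. \<forall>hs. ((\<lambda>y. D y hs) has_derivative (\<lambda>h. D x (h # hs))) (at x)"
    and W_inv: "\<forall>s\<in>U. qpF H d A b I 0 (W s) = s"
    and s0U: "qpF H d A b I 0 w1 \<in> U"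
    and Ws0: "W (qpF H d A b I 0 w1) = w1"
    and q: "q \<ge> 1"
  shows "(let r = qpF H d A b I \<mu>' w1; wh = what W I \<mu>' r
      in frechet_derivative (qpF H d A b I \<mu>') (at w1) (wh (q + 1))
         = - (\<Sum>i = 1..q. real ((q + 1) choose i) *\<^sub>R
                (0, \<chi> l. if l \<in> I then snd (wh (q + 1 - i)) $ l * (A *v fst (wh i)) $ l else 0)))"
proof -
  define r where "r = qpF H d A b I \<mu>' w1"
  define n where "n = nml r"
  define a where "a = - norm r"
  define p where "p \<rho> = \<rho> *\<^sub>R n + \<mu>' *\<^sub>R ehat I" for \<rho> :: real
  define S where "S = p -` U"
  define \<psi> where "\<psi> j \<rho> = D (p \<rho>) (replicate j n)" for j \<rho>
  define L where "L = LinP H A b I"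
  define B where "B = BilP A I"
  have bl: "bounded_linear L" unfolding L_def by (rule LinP_bl)
  have bb: "bounded_bilinear B" unfolding B_def by (rule BilP_bb)
  have nr: "norm r *\<^sub>R n = r" unfolding n_def nml_def by auto
  have pr: "p (norm r) = qpF H d A b I 0 w1"
    unfolding p_def nr by (simp add: r_def F_mu[of _ _ _ _ _ "\<mu>'"])
  have pD: "(p has_derivative (\<lambda>t. t *\<^sub>R n)) (at \<rho>)" for \<rho>
    unfolding p_def by (auto intro!: derivative_eq_intros)
  have Sopen: "open S" unfolding S_def
    by (rule continuous_open_vimage[OF U]) (use pD has_derivative_continuous in blast)
  have rS: "norm r \<in> S" unfolding S_def using pr s0U by simp
  have der: "(\<psi> j has_vector_derivative \<psi> (Suc j) \<rho>) (at \<rho>)" if "\<rho> \<in> S" for j \<rho>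
  proof -
    have pU: "p \<rho> \<in> U" using that S_def by simp
    have d1: "((\<lambda>y. D y (replicate j n)) has_derivative (\<lambda>h. D (p \<rho>) (h # replicate j n))) (at (p \<rho>))"
      using DD pU by blast
    have "((\<lambda>\<rho>. D (p \<rho>) (replicate j n)) has_derivative (\<lambda>t. D (p \<rho>) ((t *\<^sub>R n) # replicate j n))) (at \<rho>)"
      using diff_chain_at[OF pD d1] by (simp add: o_def)
    moreover have "(\<lambda>t. D (p \<rho>) ((t *\<^sub>R n) # replicate j n)) = (\<lambda>t. t *\<^sub>R D (p \<rho>) (n # replicate j n))"
    proof -
      have lin: "linear (\<lambda>h. D (p \<rho>) (h # replicate j n))"
        using d1 has_derivative_linear by blast
      show ?thesis by (rule ext) (rule linear_cmul[OF lin])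
    qed
    ultimately show ?thesis unfolding \<psi>_def has_vector_derivative_def by simp
  qed
  have psi0: "\<psi> 0 \<rho> = W (p \<rho>)" if "\<rho> \<in> S" for \<rho>
    using that D0 unfolding \<psi>_def S_def by simp
  have ident: "L (\<psi> 0 \<rho>) + B (\<psi> 0 \<rho>) (\<psi> 0 \<rho>) = \<rho> *\<^sub>R n + (\<mu>' *\<^sub>R ehat I - cP d b I)" if "\<rho> \<in> S" for \<rho>
  proof -
    have "qpF H d A b I 0 (W (p \<rho>)) = p \<rho>" using W_inv that S_def by simp
    then show ?thesis using psi0[OF that] unfolding L_def B_def p_def
      by (simp add: F_decomp algebra_simps)
  qed
  have hv: "higher_vderiv j (wpath W I \<mu>' r) \<rho> = \<psi> j \<rho>" if "\<rho> \<in> S" for j \<rho>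
    using that
  proof (induction j arbitrary: \<rho>)
    case 0
    then show ?case using psi0 by (simp add: wpath_def p_def n_def)
  next
    case (Suc j)
    have "(higher_vderiv j (wpath W I \<mu>' r) has_vector_derivative \<psi> (Suc j) \<rho>) (at \<rho>)"
      by (rule has_vector_derivative_transform_within_open[OF der[OF Suc.prems] Sopen Suc.prems])
         (simp add: Suc.IH)
    then show ?case by (simp add: vector_derivative_at)
  qed
  have wh: "what W I \<mu>' r j = a ^ j *\<^sub>R \<psi> j (norm r)" for j
    unfolding what_def a_def using hv[OF rS] by simp
  have w1: "\<psi> 0 (norm r) = w1" using psi0[OF rS] pr Ws0 by simp
  have fd: "frechet_derivative (qpF H d A b I \<mu>') (at w1) = (\<lambda>h. L h + B w1 h + B h w1)"
    unfolding L_def B_def by (rule sym, rule frechet_derivative_at[OF F_deriv])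
  have PI: "L (\<psi> (q+1) (norm r)) + B (\<psi> 0 (norm r)) (\<psi> (q+1) (norm r)) + B (\<psi> (q+1) (norm r)) (\<psi> 0 (norm r))
       = - (\<Sum>i = 1..q. real ((q+1) choose i) *\<^sub>R B (\<psi> i (norm r)) (\<psi> (q+1-i) (norm r)))"
    by (rule path_identity[OF bl bb Sopen rS der ident q])
  have Bform: "B x y = (0, \<chi> l. if l \<in> I then snd y $ l * (A *v fst x) $ l else 0)" for x y
    unfolding B_def BilP_def by (rule arg_cong[where f="\<lambda>f. (0, vec_lambda f)"]) (auto simp: fun_eq_iff)
  have "frechet_derivative (qpF H d A b I \<mu>') (at w1) (what W I \<mu>' r (q + 1))
      = a ^ (q+1) *\<^sub>R (L (\<psi> (q+1) (norm r)) + B w1 (\<psi> (q+1) (norm r)) + B (\<psi> (q+1) (norm r)) w1)"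
    unfolding fd wh
    by (simp add: linear_cmul[OF bounded_linear.linear[OF bl]] bounded_bilinear.scaleR_right[OF bb]
        bounded_bilinear.scaleR_left[OF bb] scaleR_add_right)
  also have "\<dots> = - (\<Sum>i = 1..q. real ((q+1) choose i) *\<^sub>R B (a ^ i *\<^sub>R \<psi> i (norm r)) (a ^ (q+1-i) *\<^sub>R \<psi> (q+1-i) (norm r)))"
  proof -
    have "a ^ (q+1) *\<^sub>R (\<Sum>i = 1..q. real ((q+1) choose i) *\<^sub>R B (\<psi> i (norm r)) (\<psi> (q+1-i) (norm r)))
        = (\<Sum>i = 1..q. real ((q+1) choose i) *\<^sub>R B (a ^ i *\<^sub>R \<psi> i (norm r)) (a ^ (q+1-i) *\<^sub>R \<psi> (q+1-i) (norm r)))"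
      unfolding scaleR_sum_right
    proof (rule sum.cong[OF refl])
      fix i assume "i \<in> {1..q}"
      then have "a ^ (q+1) = a ^ i * a ^ (q+1-i)" by (simp add: power_add[symmetric])
      then show "a ^ (q+1) *\<^sub>R (real ((q+1) choose i) *\<^sub>R B (\<psi> i (norm r)) (\<psi> (q+1-i) (norm r)))
          = real ((q+1) choose i) *\<^sub>R B (a ^ i *\<^sub>R \<psi> i (norm r)) (a ^ (q+1-i) *\<^sub>R \<psi> (q+1-i) (norm r))"
        by (simp add: bounded_bilinear.scaleR_right[OF bb] bounded_bilinear.scaleR_left[OF bb])
    qed
    then show ?thesis using PI w1 by (simp add: scaleR_right.minus)
  qed
  finally show ?thesis unfolding Let_def r_def[symmetric] wh[symmetric] Bform .
qed



theorem proposition3: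
  fixes H :: "real^'n^'n" and d :: "real^'n"
    and A :: "real^'n^'m" and b :: "real^'m" and I :: "'m set"
    and xs :: "real^'n" and ls :: "real^'m"
    and W :: "((real^'n) \<times> (real^'m)) \<Rightarrow> ((real^'n) \<times> (real^'m))" and U :: "((real^'n) \<times> (real^'m)) set"
    and \<mu> :: "nat \<Rightarrow> real" and w :: "nat \<Rightarrow> (real^'n) \<times> (real^'m)"
    and \<epsilon> :: "real \<Rightarrow> real" and \<sigma> :: "nat \<Rightarrow> nat"
  assumes H_symm: "transpose H = H"
    \<comment> \<open>KKT point (xs, ls)\<close>
    and KKT_stat: "qp_g H d xs - transpose A *v ls = 0"
    and KKT_ineq: "\<forall>i\<in>I. qp_c A b xs $ i \<ge> 0 \<and> ls $ i \<ge> 0 \<and> qp_c A b xs $ i * ls $ i = 0"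
    and KKT_eq: "\<forall>i\<in>UNIV - I. qp_c A b xs $ i = 0"
    \<comment> \<open>LICQ\<close>
    and LICQ: "independent ((\<lambda>i. A $ i) ` active_set A b I xs)
               \<and> inj_on (\<lambda>i. A $ i) (active_set A b I xs)"
    \<comment> \<open>strict complementarity\<close>
    and SC: "\<forall>i\<in>I. qp_c A b xs $ i = 0 \<longrightarrow> ls $ i > 0"
    \<comment> \<open>strong second-order sufficiency\<close>
    and SSOSC: "\<exists>\<omega>>0. \<forall>p. (\<forall>i\<in>active_set A b I xs. A $ i \<bullet> p = 0)
                       \<longrightarrow> p \<bullet> (H *v p) \<ge> \<omega> * (norm p)\<^sup>2"
    \<comment> \<open>W = w^{w*,0}: the locally unique smooth function near 0 with F^0(W r) = r, W 0 = w*\<close>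
    and U_open: "open U" and U0: "0 \<in> U"
    and W_smooth: "smooth_on U W"
    and W0: "W 0 = (xs, ls)"
    and W_inv: "\<forall>s\<in>U. qpF H d A b I 0 (W s) = s"
    \<comment> \<open>the sequences\<close>
    and mu_pos: "\<forall>k. \<mu> k > 0" and mu_decr: "\<forall>k. \<mu> (Suc k) < \<mu> k"
    and eps_pos: "\<forall>t>0. \<epsilon> t > 0"
    and eps_Theta: "\<epsilon> \<in> \<Theta>[at_right 0](\<lambda>t. t)"
    and w_approx: "\<forall>k. norm (qpF H d A b I (\<mu> k) (w (Suc k))) \<le> \<epsilon> (\<mu> k)"
    \<comment> \<open>subsequence K = range sigma along which w_{k+1} tends to w*\<close>
    and sigma: "strict_mono \<sigma>"
    and w_conv: "(\<lambda>j. w (Suc (\<sigma> j))) \<longlonglongrightarrow> (xs, ls)"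
  shows "\<exists>k0. \<forall>j. \<sigma> j \<ge> k0 \<longrightarrow> (\<forall>q\<ge>1.
     (let k = \<sigma> j;
          r = qpF H d A b I (\<mu> (Suc k)) (w (Suc k));
          wh = what W I (\<mu> (Suc k)) r
      in frechet_derivative (qpF H d A b I (\<mu> (Suc k))) (at (w (Suc k))) (wh (q + 1))
         = - (\<Sum>i = 1..q. real ((q + 1) choose i) *\<^sub>R
                (0, \<chi> l. if l \<in> I then snd (wh (q + 1 - i)) $ l * (A *v fst (wh i)) $ l else 0))))"
proof -
  obtain D :: "((real^'n) \<times> (real^'m)) \<Rightarrow> ((real^'n) \<times> (real^'m)) list \<Rightarrow> ((real^'n) \<times> (real^'m))"
    where D0: "\<forall>x\<in>U. D x [] = W x"
      and DD: "\<forall>x\<in>U. \<forall>hs. ((\<lambda>y. D y hs) has_derivative (\<lambda>h. D x (h # hs))) (at x)"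
    using W_smooth unfolding smooth_on_def by blast
  define ws where "ws = (xs, ls)"
  define F0 where "F0 = qpF H d A b I 0"
  define L where "L = LinP H A b I"
  define B where "B = BilP A I"
  define W' where "W' = (\<lambda>h. D 0 [h])"
  define J0 where "J0 = (\<lambda>h. L h + B ws h + B h ws)"
  have bl: "bounded_linear L" unfolding L_def by (rule LinP_bl)
  have bb: "bounded_bilinear B" unfolding B_def by (rule BilP_bb)
  have hW: "(W has_derivative W') (at 0)"
    unfolding W'_def
    by (rule has_derivative_transform_within_open[OF _ U_open U0, of "\<lambda>y. D y []"])
       (use DD U0 D0 in auto)
  have hF: "(F0 has_derivative J0) (at ws)"
    unfolding F0_def J0_def L_def B_def by (rule F_deriv)
  have chain: "((F0 \<circ> W) has_derivative (J0 \<circ> W')) (at 0)"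
    using diff_chain_at[OF hW] hF W0 ws_def by simp
  have idd: "((F0 \<circ> W) has_derivative (\<lambda>x. x)) (at 0)"
    by (rule has_derivative_transform_within_open[OF has_derivative_ident U_open U0])
       (use W_inv F0_def in simp)
  have JW: "J0 \<circ> W' = id" using has_derivative_unique[OF chain idd] by (simp add: id_def)
  have linW: "linear W'" using hW has_derivative_linear by blast
  have linJ: "linear J0" using hF has_derivative_linear by blast
  have WJ: "W' \<circ> J0 = id" using linear_inverse_left[OF linJ linW] JW by simp
  obtain K where K: "K > 0" "\<And>x. norm (W' x) \<le> norm x * K"
    using bounded_linear.pos_bounded[OF has_derivative_bounded_linear[OF hW]] by blast
  obtain KB where KB: "KB > 0" "\<And>a c. norm (B a c) \<le> norm a * norm c * KB"
    using bounded_bilinear.pos_bounded[OF bb] by blast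
  define \<eta> where "\<eta> = 1 / (4 * K * KB)"
  have eta: "\<eta> > 0" unfolding \<eta>_def using K KB by simp
  have F0e: "F0 x = L x + B x x + cP d b I" for x
    unfolding F0_def L_def B_def by (simp add: F_decomp)
  have inj: "w1 = w2" if w1: "norm (w1 - ws) < \<eta>" and w2: "norm (w2 - ws) < \<eta>" and eq: "F0 w1 = F0 w2" for w1 w2
  proof -
    define \<delta> where "\<delta> = w1 - w2"
    have lin: "linear L" using bl bounded_linear.linear by blast
    have "L w1 + B w1 w1 = L w2 + B w2 w2" using eq unfolding F0e by simp
    then have key: "J0 \<delta> = - (B (w1 - ws) \<delta> + B \<delta> (w2 - ws))"
      unfolding J0_def \<delta>_def
      by (simp add: linear_diff[OF lin] bounded_bilinear.diff_left[OF bb]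
          bounded_bilinear.diff_right[OF bb] algebra_simps)
    have "norm (J0 \<delta>) \<le> norm (w1 - ws) * norm \<delta> * KB + norm \<delta> * norm (w2 - ws) * KB"
      unfolding key norm_minus_cancel
      by (rule order_trans[OF norm_triangle_ineq add_mono[OF KB(2) KB(2)]])
    also have "\<dots> = (norm (w1 - ws) + norm (w2 - ws)) * (KB * norm \<delta>)" by (simp add: algebra_simps)
    also have "\<dots> \<le> (2 * \<eta>) * (KB * norm \<delta>)"
      by (rule mult_right_mono) (use w1 w2 KB in auto)
    finally have nJ: "norm (J0 \<delta>) \<le> 2 * \<eta> * KB * norm \<delta>" by simp
    have "norm \<delta> = norm (W' (J0 \<delta>))" using WJ by (metis comp_apply id_apply)
    also have "\<dots> \<le> norm (J0 \<delta>) * K" by (rule K(2))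
    also have "\<dots> \<le> (2 * \<eta> * KB * norm \<delta>) * K" by (rule mult_right_mono[OF nJ]) (use K in simp)
    also have "\<dots> = norm \<delta> / 2" unfolding \<eta>_def using K KB by (simp add: field_simps)
    finally have "norm \<delta> \<le> norm \<delta> / 2" .
    then have "norm \<delta> = 0" by simp
    then show ?thesis unfolding \<delta>_def by simp
  qed
  have contW: "isCont W 0" using hW has_derivative_continuous by blast
  obtain e1 where e1: "e1 > 0" "\<And>s. norm s < e1 \<Longrightarrow> norm (W s - ws) < \<eta>"
  proof -
    obtain s where "s > 0" "\<forall>x. x \<noteq> 0 \<and> norm (x - 0) < s \<longrightarrow> norm (W x - W 0) < \<eta>"
      using LIM_D[OF contW[unfolded isCont_def] eta] by blast
    then show ?thesis using that[of s] W0 ws_def eta by (metis diff_zero diff_self norm_zero)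
  qed
  obtain e2 where e2: "e2 > 0" "ball 0 e2 \<subseteq> U" using U_open U0 open_contains_ball by blast
  define e where "e = min e1 e2"
  have e: "e > 0" using e1 e2 e_def by simp
  have F0ws: "F0 ws = 0" using W_inv U0 W0 ws_def F0_def by metis
  have contF: "isCont F0 ws" using hF has_derivative_continuous by blast
  have limF: "(\<lambda>j. F0 (w (Suc (\<sigma> j)))) \<longlonglongrightarrow> 0"
    using isCont_tendsto_compose[OF contF w_conv[folded ws_def]] F0ws by simp
  have "\<forall>\<^sub>F j in sequentially. dist (F0 (w (Suc (\<sigma> j)))) 0 < e \<and> dist (w (Suc (\<sigma> j))) ws < \<eta>"
    using limF w_conv[folded ws_def] e eta by (auto simp: tendsto_iff intro: eventually_conj)
  then obtain N where N: "\<And>j. j \<ge> N \<Longrightarrow> norm (F0 (w (Suc (\<sigma> j)))) < e \<and> norm (w (Suc (\<sigma> j)) - ws) < \<eta>"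
    by (auto simp: eventually_sequentially dist_norm)
  show ?thesis
  proof (intro exI allI impI)
    fix j :: nat and q :: nat assume j: "\<sigma> N \<le> \<sigma> j" and q: "1 \<le> q"
    have jN: "N \<le> j" using j strict_mono_less_eq[OF sigma] by blast
    define w1 where "w1 = w (Suc (\<sigma> j))"
    have n1: "norm (F0 w1) < e" and n2: "norm (w1 - ws) < \<eta>" using N[OF jN] w1_def by auto
    have "F0 w1 \<in> ball 0 e2" using n1 e_def by (simp add: dist_norm)
    then have s0U: "F0 w1 \<in> U" using e2 by blast
    have n3: "norm (W (F0 w1) - ws) < \<eta>" using e1(2)[of "F0 w1"] n1 e_def by simp
    have "F0 (W (F0 w1)) = F0 w1" using W_inv s0U F0_def by simp
    then have Ws0: "W (F0 w1) = w1" using inj[OF n3 n2] by simp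
    have P: "let r = qpF H d A b I (\<mu> (Suc (\<sigma> j))) w1; wh = what W I (\<mu> (Suc (\<sigma> j))) r
      in frechet_derivative (qpF H d A b I (\<mu> (Suc (\<sigma> j)))) (at w1) (wh (q + 1))
         = - (\<Sum>i = 1..q. real ((q + 1) choose i) *\<^sub>R
                (0, \<chi> l. if l \<in> I then snd (wh (q + 1 - i)) $ l * (A *v fst (wh i)) $ l else 0))"
      by (rule pointwise[OF U_open D0 DD W_inv s0U[unfolded F0_def] Ws0[unfolded F0_def] q])
    then show "let k = \<sigma> j;
          r = qpF H d A b I (\<mu> (Suc k)) (w (Suc k));
          wh = what W I (\<mu> (Suc k)) r
      in frechet_derivative (qpF H d A b I (\<mu> (Suc k))) (at (w (Suc k))) (wh (q + 1))
         = - (\<Sum>i = 1..q. real ((q + 1) choose i) *\<^sub>R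
                (0, \<chi> l. if l \<in> I then snd (wh (q + 1 - i)) $ l * (A *v fst (wh i)) $ l else 0))"
      unfolding w1_def by (simp only: Let_def)
  qed
qed

end
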